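(* Let $M$ be a matroid of rank $r$ on a finite set $E$, and let $\mathcal H$ be the set of hyperplanes of $M$. Suppose that for each $H\in\mathcal H$, $U_H$ is an $(r-1)$-free set with $\mathrm{cl}_{r-2}(U_H)=H$, and put \[ \mathcal U=\{U_H : H\in\mathcal H,\ |U_H|\ge r\}. \] Then $\mathcal U$ is the set of dependent hyperplanes of a paving matroid of rank $r$ on $E$.
   Context: A set $U\subseteq E$ is $k$-free (in $M$) if there is no circuit $C$ of $M$ with $|C|\le k$ and $C\subseteq U$. A set $X$ is $k$-closed in $M$ if $\mathrm{cl}_M(Y)\subseteq X$ for all $Y\subseteq X$ with $|Y|\le k$; $\mathrm{cl}_k(X)$ is the intersection of all $k$-closed sets containing $X$. A matroid of rank $r$ is paving if all its circuits have at least $r$ elements. *)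

theory Defs
  imports Main
begin

definition matroid :: "'a set \<Rightarrow> ('a set \<Rightarrow> bool) \<Rightarrow> bool" where
  "matroid E indep \<longleftrightarrow> finite E \<and> indep {} \<and>
     (\<forall>X. indep X \<longrightarrow> X \<subseteq> E) \<and>
     (\<forall>X Y. indep X \<and> Y \<subseteq> X \<longrightarrow> indep Y) \<and>
     (\<forall>X Y. indep X \<and> indep Y \<and> card X < card Y \<longrightarrow> (\<exists>e\<in>Y - X. indep (insert e X)))"

definition mrank :: "('a set \<Rightarrow> bool) \<Rightarrow> 'a set \<Rightarrow> nat" where
  "mrank indep X = Max {card I | I. I \<subseteq> X \<and> indep I}"

definition mcl :: "'a set \<Rightarrow> ('a set \<Rightarrow> bool) \<Rightarrow> 'a set \<Rightarrow> 'a set" where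
  "mcl E indep X = {e \<in> E. mrank indep (insert e X) = mrank indep X}"

definition circuit :: "'a set \<Rightarrow> ('a set \<Rightarrow> bool) \<Rightarrow> 'a set \<Rightarrow> bool" where
  "circuit E indep C \<longleftrightarrow> C \<subseteq> E \<and> \<not> indep C \<and> (\<forall>D. D \<subset> C \<longrightarrow> indep D)"

definition flat :: "'a set \<Rightarrow> ('a set \<Rightarrow> bool) \<Rightarrow> 'a set \<Rightarrow> bool" where
  "flat E indep X \<longleftrightarrow> X \<subseteq> E \<and> mcl E indep X = X"

definition hyperplane :: "'a set \<Rightarrow> ('a set \<Rightarrow> bool) \<Rightarrow> 'a set \<Rightarrow> bool" where
  "hyperplane E indep H \<longleftrightarrow> flat E indep H \<and> mrank indep H + 1 = mrank indep E"

text \<open>k-free and k-closed; k is an integer so that e.g. k = r - 2 with r = 1 means -1.\<close>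
definition k_free :: "'a set \<Rightarrow> ('a set \<Rightarrow> bool) \<Rightarrow> int \<Rightarrow> 'a set \<Rightarrow> bool" where
  "k_free E indep k U \<longleftrightarrow> \<not> (\<exists>C. circuit E indep C \<and> int (card C) \<le> k \<and> C \<subseteq> U)"

definition k_closed :: "'a set \<Rightarrow> ('a set \<Rightarrow> bool) \<Rightarrow> int \<Rightarrow> 'a set \<Rightarrow> bool" where
  "k_closed E indep k X \<longleftrightarrow> X \<subseteq> E \<and>
     (\<forall>Y. Y \<subseteq> X \<and> int (card Y) \<le> k \<longrightarrow> mcl E indep Y \<subseteq> X)"

definition cl_k :: "'a set \<Rightarrow> ('a set \<Rightarrow> bool) \<Rightarrow> int \<Rightarrow> 'a set \<Rightarrow> 'a set" where
  "cl_k E indep k X = \<Inter> {Z. k_closed E indep k Z \<and> X \<subseteq> Z}"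

definition paving :: "'a set \<Rightarrow> ('a set \<Rightarrow> bool) \<Rightarrow> bool" where
  "paving E indep \<longleftrightarrow> (\<forall>C. circuit E indep C \<longrightarrow> card C \<ge> mrank indep E)"

end

theory Submission
  imports Defs
begin


lemma m_fin: "matroid E indep \<Longrightarrow> finite E" unfolding matroid_def by blast
lemma m_empty: "matroid E indep \<Longrightarrow> indep {}" unfolding matroid_def by blast
lemma m_sub: "matroid E indep \<Longrightarrow> indep X \<Longrightarrow> X \<subseteq> E" unfolding matroid_def by blast
lemma m_down: "matroid E indep \<Longrightarrow> indep X \<Longrightarrow> Y \<subseteq> X \<Longrightarrow> indep Y" unfolding matroid_def by blast
lemma m_aug: "matroid E indep \<Longrightarrow> indep X \<Longrightarrow> indep Y \<Longrightarrow> card X < card Y \<Longrightarrow> \<exists>e\<in>Y - X. indep (insert e X)"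
  unfolding matroid_def by blast
lemma m_finI: "matroid E indep \<Longrightarrow> indep X \<Longrightarrow> finite X" using m_fin m_sub finite_subset by metis

lemma mrank_fin:
  assumes "matroid E indep"
  shows "finite {card I | I. I \<subseteq> X \<and> indep I}" "{card I | I. I \<subseteq> X \<and> indep I} \<noteq> {}"
proof -
  have "{card I | I. I \<subseteq> X \<and> indep I} \<subseteq> {..card E}"
    using m_sub[OF assms] m_fin[OF assms] by (auto intro!: card_mono)
  then show "finite {card I | I. I \<subseteq> X \<and> indep I}" using finite_subset by blast
  show "{card I | I. I \<subseteq> X \<and> indep I} \<noteq> {}" using m_empty[OF assms] by blast
qed

lemma mrank_ge:
  assumes "matroid E indep" "I \<subseteq> X" "indep I"
  shows "card I \<le> mrank indep X"
proof -
  have "card I \<in> {card I | I. I \<subseteq> X \<and> indep I}" using assms by blast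
  then show ?thesis unfolding mrank_def using mrank_fin[OF assms(1), of X] by (simp only: Max_ge)
qed

lemma mrank_le:
  assumes "matroid E indep" "\<And>I. I \<subseteq> X \<Longrightarrow> indep I \<Longrightarrow> card I \<le> k"
  shows "mrank indep X \<le> k"
proof -
  have "\<forall>a\<in>{card I | I. I \<subseteq> X \<and> indep I}. a \<le> k" using assms(2) by blast
  then show ?thesis unfolding mrank_def using mrank_fin[OF assms(1), of X] by (metis (no_types, lifting) Max_le_iff)
qed

lemma mrank_obtain:
  assumes "matroid E indep"
  obtains I where "I \<subseteq> X" "indep I" "card I = mrank indep X"
proof -
  have "mrank indep X \<in> {card I | I. I \<subseteq> X \<and> indep I}"
    unfolding mrank_def using mrank_fin[OF assms(1), of X] by (rule Max_in)
  then obtain I where "mrank indep X = card I" "I \<subseteq> X" "indep I" by (smt (verit) mem_Collect_eq)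
  then show ?thesis using that by metis
qed

lemma mrank_mono:
  assumes "matroid E indep" "X \<subseteq> Y"
  shows "mrank indep X \<le> mrank indep Y"
proof -
  obtain I where "I \<subseteq> X" "indep I" "card I = mrank indep X" using mrank_obtain[OF assms(1)] by blast
  then show ?thesis using mrank_ge[OF assms(1), of I Y] assms(2) by auto
qed

lemma extend:
  assumes m: "matroid E indep"
  shows "indep J \<Longrightarrow> J \<subseteq> S \<Longrightarrow> \<exists>I. J \<subseteq> I \<and> I \<subseteq> S \<and> indep I \<and> card I = mrank indep S"
proof (induction "mrank indep S - card J" arbitrary: J rule: less_induct)
  case less
  obtain I0 where I0: "I0 \<subseteq> S" "indep I0" "card I0 = mrank indep S" using mrank_obtain[OF m] by blast
  have le: "card J \<le> mrank indep S" using mrank_ge[OF m] less.prems by blast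
  show ?case
  proof (cases "card J = mrank indep S")
    case True then show ?thesis using less.prems by blast
  next
    case False
    then have "card J < card I0" using le I0 by linarith
    then obtain e where e: "e \<in> I0 - J" "indep (insert e J)"
      using m_aug[OF m less.prems(1) I0(2)] by blast
    have fJ: "finite J" using m_finI[OF m less.prems(1)] .
    have c: "card (insert e J) = card J + 1" using e fJ by simp
    have "mrank indep S - card (insert e J) < mrank indep S - card J" using c False le by simp
    from less.hyps[OF this e(2)] e I0 less.prems show ?thesis by auto
  qed
qed

lemma flat_lemma:
  assumes m: "matroid E indep" and F: "flat E indep F" and Y: "Y \<subseteq> F" "indep Y" "card Y = mrank indep F"
    and e: "e \<in> E" "\<not> indep (insert e Y)"
  shows "e \<in> F"
proof -
  obtain I where I: "Y \<subseteq> I" "I \<subseteq> insert e F" "indep I" "card I = mrank indep (insert e F)"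
    using extend[OF m Y(2), of "insert e F"] Y by blast
  have "e \<notin> I" using I e(2) m_down[OF m I(3)] by blast
  then have "I \<subseteq> F" using I by auto
  then have "mrank indep (insert e F) \<le> mrank indep F" using mrank_ge[OF m _ I(3)] I(4) by simp
  moreover have "mrank indep F \<le> mrank indep (insert e F)" using mrank_mono[OF m] by blast
  ultimately have "e \<in> mcl E indep F" using e unfolding mcl_def by simp
  then show ?thesis using F unfolding flat_def by (metis)
qed

lemma hyp_unique:
  assumes m: "matroid E indep" and H: "hyperplane E indep H" and H': "hyperplane E indep H'"
    and Y: "Y \<subseteq> H" "Y \<subseteq> H'" "indep Y" "card Y + 1 = mrank indep E"
  shows "H \<subseteq> H'"
proof
  fix e assume eH: "e \<in> H"
  have eE: "e \<in> E" using H eH unfolding hyperplane_def flat_def by blast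
  show "e \<in> H'"
  proof (cases "e \<in> Y")
    case True then show ?thesis using Y by blast
  next
    case False
    have fY: "finite Y" using m_finI[OF m Y(3)] .
    have "\<not> indep (insert e Y)"
    proof
      assume "indep (insert e Y)"
      then have "card (insert e Y) \<le> mrank indep H" using mrank_ge[OF m] eH Y by blast
      then show False using H False fY Y(4) unfolding hyperplane_def by simp
    qed
    then show ?thesis using flat_lemma[OF m _ Y(2) Y(3) _ eE] H' Y(4) unfolding hyperplane_def by simp
  qed
qed

lemma exists_circuit:
  assumes m: "matroid E indep" and "\<not> indep Y" "Y \<subseteq> E"
  shows "\<exists>C. circuit E indep C \<and> C \<subseteq> Y"
proof -
  have fY: "finite Y" using m_fin[OF m] assms(3) finite_subset by blast
  obtain C where C: "C \<subseteq> Y" "\<not> indep C" "\<forall>D. D \<subseteq> Y \<and> \<not> indep D \<longrightarrow> card C \<le> card D"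
  proof -
    have "Y \<subseteq> Y \<and> \<not> indep Y" using assms(2) by simp
    from ex_has_least_nat[of "\<lambda>D. D \<subseteq> Y \<and> \<not> indep D", OF this]
    show ?thesis using that by metis
  qed
  have "\<forall>D. D \<subset> C \<longrightarrow> indep D"
  proof (intro allI impI)
    fix D assume "D \<subset> C"
    then have "card D < card C" using fY C(1) by (meson psubset_card_mono rev_finite_subset)
    moreover have "D \<subseteq> Y" using C(1) `D \<subset> C` by blast
    ultimately show "indep D" using C(3) by (meson not_le)
  qed
  moreover have "C \<subseteq> E" using C(1) assms(3) by (rule order_trans)
  ultimately have "circuit E indep C" unfolding circuit_def using C(2) by simp
  then show ?thesis using C(1) by metis
qed




locale pav =
  fixes E :: "'a set" and r :: nat and UU :: "'a set set" and B :: "'a set"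
  assumes finE: "finite E"
    and P1: "\<And>X. X \<in> UU \<Longrightarrow> X \<subseteq> E \<and> r \<le> card X \<and> 1 \<le> r"
    and P2: "\<And>X X' Y. X \<in> UU \<Longrightarrow> X' \<in> UU \<Longrightarrow> Y \<subseteq> X \<Longrightarrow> Y \<subseteq> X' \<Longrightarrow> card Y + 1 = r \<Longrightarrow> X = X'"
    and P3: "B \<subseteq> E" "card B = r" "\<And>X. X \<in> UU \<Longrightarrow> \<not> B \<subseteq> X"
begin

definition ind :: "'a set \<Rightarrow> bool" where
  "ind X \<longleftrightarrow> X \<subseteq> E \<and> card X \<le> r \<and> (card X = r \<longrightarrow> (\<forall>U\<in>UU. \<not> X \<subseteq> U))"

lemma fin: "X \<subseteq> E \<Longrightarrow> finite X" using finE finite_subset by metis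

lemma ind_small: "X \<subseteq> E \<Longrightarrow> card X < r \<Longrightarrow> ind X"
  unfolding ind_def by simp

lemma ind_r: "X \<subseteq> E \<Longrightarrow> card X = r \<Longrightarrow> (\<And>U. U \<in> UU \<Longrightarrow> \<not> X \<subseteq> U) \<Longrightarrow> ind X"
  unfolding ind_def by simp

lemma aug_core:
  assumes X: "X \<subseteq> E" "card X + 1 = r" and Y: "Y \<subseteq> E" "\<And>U. U \<in> UU \<Longrightarrow> \<not> Y \<subseteq> U"
    and ne: "Y - X \<noteq> {}"
  shows "\<exists>y\<in>Y - X. \<forall>U\<in>UU. \<not> insert y X \<subseteq> U"
proof (rule ccontr)
  assume "\<not> ?thesis"
  then have all: "\<forall>y\<in>Y - X. \<exists>U\<in>UU. insert y X \<subseteq> U" by metis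
  obtain y0 where y0: "y0 \<in> Y - X" using ne by blast
  obtain U0 where U0: "U0 \<in> UU" "insert y0 X \<subseteq> U0" using all y0 by metis
  have "Y \<subseteq> U0"
  proof
    fix y assume y: "y \<in> Y"
    show "y \<in> U0"
    proof (cases "y \<in> X")
      case True then show ?thesis using U0 by blast
    next
      case False
      then obtain Uy where Uy: "Uy \<in> UU" "insert y X \<subseteq> Uy" using all y by blast
      have "Uy = U0" using P2[OF Uy(1) U0(1), of X] Uy U0 X by blast
      then show ?thesis using Uy by blast
    qed
  qed
  then show False using Y U0 by blast
qed

lemma ind_matroid: "matroid E ind"
  unfolding matroid_def
proof (intro conjI allI impI)
  show "finite E" by (rule finE)
  show "ind {}"
  proof (cases "r = 0")
    case True
    then have "UU = {}" using P1 by fastforce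
    then show ?thesis unfolding ind_def by simp
  next
    case False then show ?thesis unfolding ind_def by simp
  qed
  fix X assume "ind X" then show "X \<subseteq> E" unfolding ind_def by simp
next
  fix X Y assume a: "ind X \<and> Y \<subseteq> X"
  then have XE: "X \<subseteq> E" "card X \<le> r" unfolding ind_def by auto
  have cYX: "card Y \<le> card X" using a fin[OF XE(1)] card_mono by metis
  show "ind Y"
  proof (cases "card Y = r")
    case True
    then have "card Y = card X" using cYX XE by linarith
    then have "Y = X" using a fin[OF XE(1)] card_subset_eq by metis
    then show ?thesis using a by simp
  next
    case False then show ?thesis using a XE cYX unfolding ind_def by auto
  qed
next
  fix X Y assume a: "ind X \<and> ind Y \<and> card X < card Y"
  then have XE: "X \<subseteq> E" "card X \<le> r" and YE: "Y \<subseteq> E" "card Y \<le> r" and lt: "card X < card Y"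
    unfolding ind_def by auto
  have ne: "Y - X \<noteq> {}"
  proof
    assume "Y - X = {}"
    then have "Y \<subseteq> X" by blast
    then show False using card_mono[OF fin[OF XE(1)]] lt by (metis not_le)
  qed
  show "\<exists>e\<in>Y - X. ind (insert e X)"
  proof (cases "card X + 1 < r")
    case True
    obtain y where y: "y \<in> Y - X" using ne by blast
    have "card (insert y X) = card X + 1" using y fin[OF XE(1)] by simp
    then have "ind (insert y X)" using True y YE XE by (intro ind_small) auto
    then show ?thesis using y by blast
  next
    case False
    then have cX: "card X + 1 = r" "card Y = r" using lt YE by linarith+
    have "\<And>U. U \<in> UU \<Longrightarrow> \<not> Y \<subseteq> U" using a cX(2) unfolding ind_def by blast
    then obtain y where y: "y \<in> Y - X" "\<forall>U\<in>UU. \<not> insert y X \<subseteq> U"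
      using aug_core[OF XE(1) cX(1) YE(1) _ ne] by metis
    have "card (insert y X) = r" using y fin[OF XE(1)] cX by simp
    then have "ind (insert y X)" using y YE XE by (intro ind_r) auto
    then show ?thesis using y by blast
  qed
qed

lemma ind_le: "ind X \<Longrightarrow> card X \<le> r" unfolding ind_def by simp

lemma rankE: "mrank ind E = r"
proof (rule antisym)
  show "mrank ind E \<le> r" using mrank_le[OF ind_matroid] ind_le by metis
  have "ind B" using P3 by (intro ind_r) auto
  then show "r \<le> mrank ind E" using mrank_ge[OF ind_matroid P3(1)] P3(2) by metis
qed

lemma paving: "paving E ind"
  unfolding paving_def rankE
proof (intro allI impI)
  fix C assume C: "circuit E ind C"
  show "r \<le> card C"
  proof (rule ccontr)
    assume "\<not> r \<le> card C"
    then have "ind C" using C unfolding circuit_def by (intro ind_small) auto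
    then show False using C unfolding circuit_def by simp
  qed
qed

lemma rank_in_U:
  assumes "U \<in> UU" "X \<subseteq> U"
  shows "mrank ind X \<le> r - 1"
proof (rule mrank_le[OF ind_matroid])
  fix I assume I: "I \<subseteq> X" "ind I"
  have "card I \<noteq> r" using I assms unfolding ind_def by blast
  then show "card I \<le> r - 1" using ind_le[OF I(2)] by linarith
qed

lemma rank_ge_r1:
  assumes "X \<subseteq> E" "r \<le> card X + 1" "1 \<le> r"
  shows "r - 1 \<le> mrank ind X"
proof -
  obtain Z where Z: "Z \<subseteq> X" "card Z = r - 1"
    using obtain_subset_with_card_n[of "r - 1" X] assms by (metis le_diff_conv)
  have "ind Z" using Z assms by (intro ind_small) auto
  then show ?thesis using mrank_ge[OF ind_matroid Z(1)] Z(2) by metis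
qed

lemma rank_not_in_U:
  assumes X: "X \<subseteq> E" "r \<le> card X" "1 \<le> r" and nU: "\<And>U. U \<in> UU \<Longrightarrow> \<not> X \<subseteq> U"
  shows "r \<le> mrank ind X"
proof -
  obtain Z where Z: "Z \<subseteq> X" "card Z = r - 1"
    using obtain_subset_with_card_n[of "r - 1" X] X by (metis le_diff_conv le_add1 order_trans)
  have ZE: "Z \<subseteq> E" using Z X by blast
  have "Z \<noteq> X" using Z X by auto
  then have ne: "X - Z \<noteq> {}" using Z by blast
  obtain y where y: "y \<in> X - Z" "\<forall>U\<in>UU. \<not> insert y Z \<subseteq> U"
    using aug_core[OF ZE _ X(1) nU ne] Z X by fastforce
  have c: "card (insert y Z) = r" using y fin[OF ZE] Z X by simp
  have "ind (insert y Z)" using y X Z c by (intro ind_r) auto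
  then show ?thesis using mrank_ge[OF ind_matroid, of "insert y Z" X] y Z c by auto
qed

lemma hyps: "{X. hyperplane E ind X \<and> \<not> ind X} = UU"
proof (intro equalityI subsetI)
  fix X assume "X \<in> {X. hyperplane E ind X \<and> \<not> ind X}"
  then have H: "hyperplane E ind X" and nX: "\<not> ind X" by auto
  have XE: "X \<subseteq> E" and rk: "mrank ind X + 1 = r" and cl: "mcl E ind X = X"
    using H rankE unfolding hyperplane_def flat_def by auto
  have r1: "1 \<le> r" using rk by simp
  obtain U where U: "U \<in> UU" "X \<subseteq> U"
  proof (cases "\<exists>U\<in>UU. X \<subseteq> U")
    case True then show ?thesis using that by blast
  next
    case False
    have "\<not> r \<le> card X"
    proof
      assume "r \<le> card X"
      then have "r \<le> mrank ind X" using rank_not_in_U[OF XE _ r1] False by blast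
      then show False using rk by simp
    qed
    then have "ind X" using XE by (intro ind_small) auto
    then show ?thesis using nX by simp
  qed
  have "U \<subseteq> X"
  proof
    fix e assume e: "e \<in> U"
    have eE: "e \<in> E" using e U P1 by blast
    have "mrank ind (insert e X) \<le> r - 1" using rank_in_U[OF U(1)] e U by blast
    moreover have "mrank ind X \<le> mrank ind (insert e X)" using mrank_mono[OF ind_matroid] by blast
    ultimately have "mrank ind (insert e X) = mrank ind X" using rk by linarith
    then have "e \<in> mcl E ind X" using eE unfolding mcl_def by simp
    then show "e \<in> X" using cl by simp
  qed
  then show "X \<in> UU" using U by simp
next
  fix U assume U: "U \<in> UU"
  have UE: "U \<subseteq> E" and cU: "r \<le> card U" and r1: "1 \<le> r" using P1[OF U] by auto
  have rkU: "mrank ind U = r - 1"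
    using rank_in_U[OF U order_refl] rank_ge_r1[OF UE _ r1] cU by (meson antisym le_add1 order_trans)
  have "mcl E ind U \<subseteq> U"
  proof
    fix e assume e: "e \<in> mcl E ind U"
    then have eE: "e \<in> E" and eq: "mrank ind (insert e U) = mrank ind U" unfolding mcl_def by auto
    show "e \<in> U"
    proof (rule ccontr)
      assume eU: "e \<notin> U"
      obtain Y where Y: "Y \<subseteq> U" "card Y = r - 1"
        using obtain_subset_with_card_n[of "r - 1" U] cU by (metis diff_le_self order_trans)
      have nU: "\<And>U'. U' \<in> UU \<Longrightarrow> \<not> insert e U \<subseteq> U'"
      proof
        fix U' assume U': "U' \<in> UU" "insert e U \<subseteq> U'"
        have "U = U'" using P2[OF U U'(1), of Y] Y U' r1 by auto
        then show False using U' eU by blast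
      qed
      have "card (insert e U) = card U + 1" using eU fin[OF UE] by simp
      then have "r \<le> mrank ind (insert e U)" using rank_not_in_U[OF _ _ r1 nU] eE UE cU by simp
      then show False using eq rkU r1 by simp
    qed
  qed
  moreover have "U \<subseteq> mcl E ind U" using UE unfolding mcl_def by (auto simp: insert_absorb)
  ultimately have fl: "flat E ind U" unfolding flat_def using UE by blast
  have "\<not> ind U"
  proof
    assume "ind U"
    then have "card U = r" using ind_le cU by (metis antisym)
    then show False using \<open>ind U\<close> U unfolding ind_def by blast
  qed
  then show "U \<in> {X. hyperplane E ind X \<and> \<not> ind X}"
    using fl rkU rankE r1 unfolding hyperplane_def by simp
qed

lemma main: "\<exists>indep'. matroid E indep' \<and> mrank indep' E = r \<and> paving E indep' \<and>
           {X. hyperplane E indep' X \<and> \<not> indep' X} = UU"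
  using ind_matroid rankE paving hyps by blast

end


lemma U_sub:
  assumes H: "hyperplane E indep H" and c: "cl_k E indep k X = H"
  shows "X \<subseteq> H"
proof -
  have HE: "H \<subseteq> E" using H unfolding hyperplane_def flat_def by simp
  show ?thesis
  proof (cases "X \<subseteq> E")
    case True
    then show ?thesis using c unfolding cl_k_def by blast
  next
    case False
    then have "{Z. k_closed E indep k Z \<and> X \<subseteq> Z} = {}" unfolding k_closed_def by blast
    then have "H = UNIV" using c unfolding cl_k_def by (metis Inter_empty)
    then show ?thesis by simp
  qed
qed

theorem lemma4p3:
  fixes E :: "'a set" and indep :: "'a set \<Rightarrow> bool" and r :: nat
    and U :: "'a set \<Rightarrow> 'a set"
  assumes "matroid E indep"
    and "mrank indep E = r"
    and "\<forall>H. hyperplane E indep H \<longrightarrow>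
            k_free E indep (int r - 1) (U H) \<and> cl_k E indep (int r - 2) (U H) = H"
  shows "\<exists>indep'. matroid E indep' \<and> mrank indep' E = r \<and> paving E indep' \<and>
           {X. hyperplane E indep' X \<and> \<not> indep' X} =
           {U H | H. hyperplane E indep H \<and> card (U H) \<ge> r}"
proof -
  note m = assms(1)
  have UH: "U H \<subseteq> H" "U H \<subseteq> E" "H \<subseteq> E" "mrank indep H + 1 = r" if "hyperplane E indep H" for H
  proof -
    show "U H \<subseteq> H" using U_sub[OF that] assms(3) that by blast
    moreover show "H \<subseteq> E" using that unfolding hyperplane_def flat_def by simp
    ultimately show "U H \<subseteq> E" by blast
    show "mrank indep H + 1 = r" using that assms(2) unfolding hyperplane_def by simp
  qed
  obtain B where B: "B \<subseteq> E" "indep B" "card B = r" using mrank_obtain[OF m, of E] assms(2) by metis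
  let ?UU = "{U H | H. hyperplane E indep H \<and> card (U H) \<ge> r}"
  have "pav E r ?UU B"
  proof
    show "finite E" using m_fin[OF m] .
  next
    fix X assume "X \<in> ?UU"
    then obtain H where H: "X = U H" "hyperplane E indep H" "card (U H) \<ge> r" by blast
    then show "X \<subseteq> E \<and> r \<le> card X \<and> 1 \<le> r" using UH[OF H(2)] by auto
  next
    fix X X' Y assume a: "X \<in> ?UU" "X' \<in> ?UU" "Y \<subseteq> X" "Y \<subseteq> X'" "card Y + 1 = r"
    obtain H where H: "X = U H" "hyperplane E indep H" by (smt (verit) a(1) mem_Collect_eq)
    obtain H' where H': "X' = U H'" "hyperplane E indep H'" by (smt (verit) a(2) mem_Collect_eq)
    have YE: "Y \<subseteq> E" using UH[OF H(2)] a H by blast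
    have "indep Y"
    proof (rule ccontr)
      assume "\<not> indep Y"
      then obtain C where C: "circuit E indep C" "C \<subseteq> Y" using exists_circuit[OF m _ YE] by metis
      have "finite Y" using m_fin[OF m] YE finite_subset by metis
      then have "card C \<le> card Y" using C card_mono by metis
      then have "int (card C) \<le> int r - 1" using a(5) by linarith
      moreover have "C \<subseteq> U H" using C a H by blast
      ultimately show False using assms(3) H(2) C(1) unfolding k_free_def by blast
    qed
    have Y1: "Y \<subseteq> H" "Y \<subseteq> H'" using UH[OF H(2)] UH[OF H'(2)] a H H' by blast+
    have "H = H'"
      using hyp_unique[OF m H(2) H'(2) Y1 \<open>indep Y\<close>] hyp_unique[OF m H'(2) H(2) Y1(2) Y1(1) \<open>indep Y\<close>]
        a(5) assms(2) by auto
    then show "X = X'" using H H' by simp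
  next
    show "B \<subseteq> E" "card B = r" using B by auto
    fix X assume "X \<in> ?UU"
    then obtain H where H: "X = U H" "hyperplane E indep H" by blast
    show "\<not> B \<subseteq> X"
    proof
      assume "B \<subseteq> X"
      then have "B \<subseteq> H" using UH[OF H(2)] H by blast
      then have "card B \<le> mrank indep H" using mrank_ge[OF m _ B(2)] by metis
      then show False using UH(4)[OF H(2)] B by simp
    qed
  qed
  then show ?thesis by (rule pav.main)
qed


end
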